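(* For $\mathrm{Re}\,s>0$ one has $\widetilde F(s)=\frac{K_s(2)}{sK_0(2)}$. Hence $\widetilde F$ extends meromorphically to $\mathbb C$ with a single pole, a simple pole at $s=0$ with residue $1$; $\widetilde F$ is odd; and for all real $\sigma_1\le\sigma_2$ there is $C=C(\sigma_1,\sigma_2)$ with $|\widetilde F(s)|\le C|s|^{|\sigma|-1}e^{-\pi|t|/2}$ for all $s=\sigma+it\neq0$ with $\sigma_1\le\sigma\le\sigma_2$.
   Context: $K_s(y)=\frac12\int_0^\infty e^{-y(t+1/t)/2}t^{s-1}dt$. $F(x)=\frac{1}{2K_0(2)}\int_x^\infty e^{-t-1/t}\frac{dt}{t}$ for $x\ge0$, and $\widetilde F(s)=\int_0^\infty F(t)t^{s-1}dt$ for $\mathrm{Re}\,s>0$. *)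

theory Defs
  imports "HOL-Complex_Analysis.Complex_Analysis"
begin

definition besselK :: "complex \<Rightarrow> real \<Rightarrow> complex" where
  "besselK s y = (1/2) * integral {0<..}
     (\<lambda>t::real. complex_of_real (exp (- y * (t + 1/t) / 2)) * (complex_of_real t) powr (s - 1))"

text \<open>F(x) = 1/(2 K_0(2)) int_x^oo exp(-t-1/t) dt/t  (used for x >= 0).
  K_0(2) is real; we take its real part.\<close>
definition Ffun :: "real \<Rightarrow> real" where
  "Ffun x = (1 / (2 * Re (besselK 0 2))) * integral {x..} (\<lambda>t. exp (- t - 1/t) / t)"

definition Fmellin :: "complex \<Rightarrow> complex" where
  "Fmellin s = integral {0<..} (\<lambda>t::real. complex_of_real (Ffun t) * (complex_of_real t) powr (s - 1))"

end

theory Submission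
  imports Defs
begin

lemma cov_real:
  fixes f :: "real \<Rightarrow> 'a :: euclidean_space" and g :: "real \<Rightarrow> real"
  assumes "S \<in> sets lebesgue"
  assumes "\<And>x. x \<in> S \<Longrightarrow> (g has_field_derivative h x) (at x within S)"
  assumes "inj_on g S"
  assumes "(\<lambda>x. \<bar>h x\<bar> *\<^sub>R f (g x)) absolutely_integrable_on S"
  shows "f absolutely_integrable_on g ` S" "integral (g ` S) f = integral S (\<lambda>x. \<bar>h x\<bar> *\<^sub>R f (g x))"
  using has_absolute_integral_change_of_variables_real[OF assms(1-3), of f "integral S (\<lambda>x. \<bar>h x\<bar> *\<^sub>R f (g x))"] assms(4)
  by auto

lemma exp_neg_le_pow:
  assumes "w > 0" "N > 0"
  shows "exp (-w) \<le> real N ^ N / w ^ N"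
proof -
  have "w / N \<le> exp (w / N)"
    using exp_ge_add_one_self[of "w/N"] by linarith
  hence "(w / N) ^ N \<le> exp (w / N) ^ N"
    using assms by (intro power_mono) auto
  also have "\<dots> = exp w"
    using assms by (simp add: exp_of_nat_mult[symmetric])
  finally have "w ^ N / real N ^ N \<le> exp w" by (simp add: power_divide)
  hence "w ^ N \<le> exp w * real N ^ N"
    using assms by (simp add: field_simps)
  thus ?thesis using assms by (simp add: exp_minus field_simps)
qed

lemma cosh_ge_exp_abs: "exp \<bar>u\<bar> \<le> 2 * cosh (u::real)"
  by (simp add: cosh_def abs_if)

lemma master_bound:
  fixes a :: real
  assumes "a \<ge> 0"
  obtains B where "B > 0" "\<And>u::real. exp (a * \<bar>u\<bar> - 2 * cosh u) \<le> B * exp (- \<bar>u\<bar>)"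
proof -
  define N where "N = nat \<lceil>a\<rceil> + 1"
  have N: "N > 0" "real N \<ge> a + 1"
    using assms by (auto simp: N_def)
  show ?thesis
  proof (rule that[of "real N ^ N"])
    show "real N ^ N > 0" using N by simp
    fix u :: real
    have "exp (a * \<bar>u\<bar> - 2 * cosh u) = exp (a * \<bar>u\<bar>) * exp (- (2 * cosh u))"
      by (simp add: exp_diff exp_minus field_simps)
    also have "exp (- (2 * cosh u)) \<le> exp (- exp \<bar>u\<bar>)"
      using cosh_ge_exp_abs[of u] by simp
    also have "\<dots> \<le> real N ^ N / exp \<bar>u\<bar> ^ N"
      by (rule exp_neg_le_pow) (use N in auto)
    also have "exp \<bar>u\<bar> ^ N = exp (real N * \<bar>u\<bar>)"
      by (simp add: exp_of_nat_mult[symmetric])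
    finally have "exp (a * \<bar>u\<bar> - 2 * cosh u) \<le> exp (a * \<bar>u\<bar>) * (real N ^ N / exp (real N * \<bar>u\<bar>))"
      by (simp add: mult_left_mono)
    also have "\<dots> = real N ^ N * exp (- ((real N - a) * \<bar>u\<bar>))"
      by (simp add: exp_diff exp_minus field_simps left_diff_distrib)
    also have "\<dots> \<le> real N ^ N * exp (- \<bar>u\<bar>)"
    proof -
      have "(real N - a) * \<bar>u\<bar> \<ge> 1 * \<bar>u\<bar>"
        using N by (intro mult_right_mono) auto
      thus ?thesis using N by (intro mult_left_mono) auto
    qed
    finally show "exp (a * \<bar>u\<bar> - 2 * cosh u) \<le> real N ^ N * exp (- \<bar>u\<bar>)" .
  qed
qed


lemma cov_real':
  fixes f :: "real \<Rightarrow> 'a :: euclidean_space" and g :: "real \<Rightarrow> real"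
  assumes "S \<in> sets lebesgue"
  assumes "\<And>x. x \<in> S \<Longrightarrow> (g has_field_derivative h x) (at x within S)"
  assumes "inj_on g S"
  assumes "f absolutely_integrable_on g ` S"
  shows "(\<lambda>x. \<bar>h x\<bar> *\<^sub>R f (g x)) absolutely_integrable_on S" "integral S (\<lambda>x. \<bar>h x\<bar> *\<^sub>R f (g x)) = integral (g ` S) f"
  using has_absolute_integral_change_of_variables_real[OF assms(1-3), of f "integral (g ` S) f"] assms(4)
  by auto

lemma reflect_UNIV:
  fixes f :: "real \<Rightarrow> 'a :: euclidean_space"
  assumes "f absolutely_integrable_on UNIV"
  shows "(\<lambda>x. f (-x)) absolutely_integrable_on UNIV" "integral UNIV (\<lambda>x. f (-x)) = integral UNIV f"
proof -
  have im: "uminus ` (UNIV::real set) = UNIV" by (simp add: surj_def)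
  have d: "\<And>x. x \<in> UNIV \<Longrightarrow> (uminus has_field_derivative (-1)) (at x within UNIV)"
    by (auto intro!: derivative_eq_intros)
  note c = cov_real'[OF _ d, of f, unfolded im]
  from c assms show "(\<lambda>x. f (-x)) absolutely_integrable_on UNIV" "integral UNIV (\<lambda>x. f (-x)) = integral UNIV f"
    by auto
qed

lemma translate_UNIV:
  fixes f :: "real \<Rightarrow> 'a :: euclidean_space"
  assumes "f absolutely_integrable_on UNIV"
  shows "(\<lambda>x. f (x + c)) absolutely_integrable_on UNIV" "integral UNIV (\<lambda>x. f (x + c)) = integral UNIV f"
proof -
  have im: "(\<lambda>x. x + c) ` (UNIV::real set) = UNIV"
    by (simp add: surj_def)
  have d: "\<And>x. x \<in> UNIV \<Longrightarrow> ((\<lambda>x. x + c) has_field_derivative 1) (at x within UNIV)"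
    by (auto intro!: derivative_eq_intros)
  note cc = cov_real'[OF _ d, of f, unfolded im]
  from cc assms show "(\<lambda>x. f (x + c)) absolutely_integrable_on UNIV" "integral UNIV (\<lambda>x. f (x + c)) = integral UNIV f"
    by (auto simp: inj_on_def)
qed

lemma abs_int_cont_bound:
  fixes f :: "real \<Rightarrow> 'a :: euclidean_space"
  assumes "continuous_on UNIV f" "g integrable_on UNIV" "\<And>x. norm (f x) \<le> g x"
  shows "f absolutely_integrable_on UNIV"
  by (rule measurable_bounded_by_integrable_imp_absolutely_integrable[OF _ _ assms(2)])
     (use assms continuous_imp_measurable_on_sets_lebesgue[OF assms(1)] in auto)

lemma exp_abs_integral:
  fixes m :: real
  assumes "m > 0"
  shows "((\<lambda>x. exp (- m * \<bar>x\<bar>)) has_integral 2 / m) UNIV"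
proof -
  have h0: "((\<lambda>x. exp (- m * x)) has_integral 1 / m) {0..}"
    using has_integral_exp_minus_to_infinity[OF assms, of 0] by simp
  have h1: "((\<lambda>x. exp (- m * \<bar>x\<bar>)) has_integral 1 / m) {0..}"
    by (rule has_integral_eq[OF _ h0]) auto
  have ai: "(\<lambda>x. exp (- m * \<bar>x\<bar>)) absolutely_integrable_on {0..}"
    using h1 by (intro nonnegative_absolutely_integrable_1) auto
  have im: "uminus ` {0::real..} = {..0}"
    by (auto simp: image_iff)
  have d: "\<And>x. x \<in> {0..} \<Longrightarrow> (uminus has_field_derivative (-1)) (at x within {0::real..})"
    by (auto intro!: derivative_eq_intros)
  note cc = cov_real[OF _ d, of "\<lambda>x. exp (- m * \<bar>x\<bar>)", unfolded im]
  have "integral {..0} (\<lambda>x. exp (- m * \<bar>x\<bar>)) = 1 / m"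
    using cc ai h1 by (auto simp: inj_on_def integral_unique)
  moreover have "(\<lambda>x. exp (- m * \<bar>x\<bar>)) integrable_on {..0}"
    using cc ai by (auto simp: inj_on_def absolutely_integrable_on_def)
  ultimately have h2: "((\<lambda>x. exp (- m * \<bar>x\<bar>)) has_integral 1 / m) {..0}"
    by (metis integrable_integral)
  have "((\<lambda>x. exp (- m * \<bar>x\<bar>)) has_integral (1/m + 1/m)) ({..0} \<union> {0..})"
    by (rule has_integral_Un[OF h2 h1]) (auto intro: negligible_subset[of "{0}"])
  moreover have "{..0} \<union> {0::real..} = UNIV" by auto
  ultimately show ?thesis by simp
qed

lemma exp_abs_integrable: "(m::real) > 0 \<Longrightarrow> (\<lambda>x. exp (- m * \<bar>x\<bar>)) integrable_on UNIV"
  using exp_abs_integral by blast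

lemma trunc_lim:
  fixes f :: "real \<Rightarrow> 'a :: euclidean_space"
  assumes "f absolutely_integrable_on UNIV"
  shows "(\<lambda>n. integral {-real n..real n} f) \<longlonglongrightarrow> integral UNIV f"
proof -
  have ni: "(\<lambda>x. norm (f x)) integrable_on UNIV" "f integrable_on UNIV"
    using assms by (auto simp: absolutely_integrable_on_def)
  have fi: "(\<lambda>x. if x \<in> {-real n..real n} then f x else 0) integrable_on UNIV" for n
    unfolding integrable_restrict_UNIV by (rule integrable_on_subinterval[OF ni(2)]) auto
  have "(\<lambda>n. integral UNIV (\<lambda>x. if x \<in> {-real n..real n} then f x else 0)) \<longlonglongrightarrow> integral UNIV f"
  proof (rule dominated_convergence(2)[OF fi ni(1)])
    show "norm (if x \<in> {-real n..real n} then f x else 0) \<le> norm (f x)" for n x by auto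
    show "(\<lambda>n. if x \<in> {-real n..real n} then f x else 0) \<longlonglongrightarrow> f x" for x
    proof (rule tendsto_eventually)
      obtain n0 :: nat where "real n0 \<ge> \<bar>x\<bar>" using real_arch_simple by blast
      hence "\<forall>n\<ge>n0. (if x \<in> {-real n..real n} then f x else 0) = f x"
        by auto
      thus "\<forall>\<^sub>F n in sequentially. (if x \<in> {-real n..real n} then f x else 0) = f x"
        by (simp only: eventually_sequentially) blast
    qed
  qed
  thus ?thesis by (simp only: integral_restrict_UNIV)
qed

lemma trunc_err:
  fixes f :: "real \<Rightarrow> 'a :: euclidean_space"
  assumes "f integrable_on UNIV" "g integrable_on UNIV" "\<And>x. norm (f x) \<le> g x"
  shows "norm (integral UNIV f - integral {a..b} f) \<le> integral UNIV g - integral {a..b} g"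
proof -
  have fi: "f integrable_on {a..b}" "g integrable_on {a..b}"
    using assms by (auto intro: integrable_on_subinterval)
  have r1: "(\<lambda>x. if x \<in> {a..b} then f x else 0) integrable_on UNIV"
    using fi(1) unfolding integrable_restrict_UNIV .
  have r2: "(\<lambda>x. if x \<in> {a..b} then g x else 0) integrable_on UNIV"
    using fi(2) unfolding integrable_restrict_UNIV .
  have e1: "integral UNIV f - integral {a..b} f = integral UNIV (\<lambda>x. if x \<in> {a..b} then 0 else f x)"
  proof -
    have "integral UNIV f - integral {a..b} f = integral UNIV f - integral UNIV (\<lambda>x. if x \<in> {a..b} then f x else 0)"
      by (simp only: integral_restrict_UNIV)
    also have "\<dots> = integral UNIV (\<lambda>x. f x - (if x \<in> {a..b} then f x else 0))"
      by (rule integral_diff[symmetric, OF assms(1) r1])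
    also have "\<dots> = integral UNIV (\<lambda>x. if x \<in> {a..b} then 0 else f x)"
      by (rule integral_cong) auto
    finally show ?thesis .
  qed
  have e2: "integral UNIV g - integral {a..b} g = integral UNIV (\<lambda>x. if x \<in> {a..b} then 0 else g x)"
  proof -
    have "integral UNIV g - integral {a..b} g = integral UNIV g - integral UNIV (\<lambda>x. if x \<in> {a..b} then g x else 0)"
      by (simp only: integral_restrict_UNIV)
    also have "\<dots> = integral UNIV (\<lambda>x. g x - (if x \<in> {a..b} then g x else 0))"
      by (rule integral_diff[symmetric, OF assms(2) r2])
    also have "\<dots> = integral UNIV (\<lambda>x. if x \<in> {a..b} then 0 else g x)"
      by (rule integral_cong) auto
    finally show ?thesis .
  qed
  have i1: "(\<lambda>x. if x \<in> {a..b} then 0 else f x) integrable_on UNIV"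
  proof -
    have r: "(\<lambda>x. if x \<in> {a..b} then f x else 0) integrable_on UNIV"
      using fi(1) unfolding integrable_restrict_UNIV .
    have "(\<lambda>x. f x - (if x \<in> {a..b} then f x else 0)) integrable_on UNIV"
      by (rule integrable_diff[OF assms(1) r])
    thus ?thesis by (rule integrable_eq) auto
  qed
  have i2: "(\<lambda>x. if x \<in> {a..b} then 0 else g x) integrable_on UNIV"
  proof -
    have r: "(\<lambda>x. if x \<in> {a..b} then g x else 0) integrable_on UNIV"
      using fi(2) unfolding integrable_restrict_UNIV .
    have "(\<lambda>x. g x - (if x \<in> {a..b} then g x else 0)) integrable_on UNIV"
      by (rule integrable_diff[OF assms(2) r])
    thus ?thesis by (rule integrable_eq) auto
  qed
  show ?thesis unfolding e1 e2
    by (rule integral_norm_bound_integral[OF i1 i2]) (use assms in auto)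
qed

lemma FTC_R:
  fixes H h :: "real \<Rightarrow> 'a :: euclidean_space"
  assumes "\<And>x. (H has_vector_derivative h x) (at x)" "h absolutely_integrable_on UNIV"
    "(H \<longlongrightarrow> 0) at_top" "(H \<longlongrightarrow> 0) at_bot"
  shows "integral UNIV h = 0"
proof -
  have e: "integral {-real n..real n} h = H (real n) - H (- real n)" for n
    by (rule integral_unique, rule fundamental_theorem_of_calculus)
       (auto intro: has_vector_derivative_at_within assms(1))
  have "(\<lambda>n. H (real n) - H (- real n)) \<longlonglongrightarrow> 0 - 0"
  proof (intro tendsto_diff)
    show "(\<lambda>n. H (real n)) \<longlonglongrightarrow> 0"
      by (rule filterlim_compose[OF assms(3) filterlim_real_sequentially])
    show "(\<lambda>n. H (- real n)) \<longlonglongrightarrow> 0"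
      by (rule filterlim_compose[OF assms(4)])
         (rule filterlim_compose[OF filterlim_uminus_at_bot_at_top filterlim_real_sequentially])
  qed
  moreover have "(\<lambda>n. H (real n) - H (- real n)) \<longlonglongrightarrow> integral UNIV h"
    using trunc_lim[OF assms(2)] by (simp add: e)
  ultimately show ?thesis using LIMSEQ_unique by fastforce
qed


definition kf :: "complex \<Rightarrow> complex \<Rightarrow> complex" where
  "kf s z = exp (s * z - 2 * cosh z)"

definition Kint :: "complex \<Rightarrow> complex" where
  "Kint s = integral UNIV (\<lambda>u::real. kf s (of_real u))"

lemma cosh_of_real': "cosh (complex_of_real x) = complex_of_real (cosh x)"
  by (simp add: cosh_def scaleR_conv_of_real flip: exp_of_real)

lemma sinh_of_real': "sinh (complex_of_real x) = complex_of_real (sinh x)"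
  by (simp add: sinh_def scaleR_conv_of_real flip: exp_of_real)

lemma norm_kf_real: "norm (kf s (of_real u)) = exp (Re s * u - 2 * cosh u)"
  by (simp add: kf_def cosh_of_real')

lemma kf_real_bound:
  assumes "\<bar>Re s\<bar> \<le> a"
  shows "norm (kf s (of_real u)) \<le> exp (a * \<bar>u\<bar> - 2 * cosh u)"
proof -
  have "Re s * u \<le> \<bar>Re s\<bar> * \<bar>u\<bar>" by (metis abs_ge_self abs_mult)
  also have "\<dots> \<le> a * \<bar>u\<bar>" using assms by (intro mult_right_mono) auto
  finally show ?thesis by (simp add: norm_kf_real)
qed

lemma kf_real_dom:
  assumes "\<bar>Re s\<bar> \<le> a"
  obtains B where "B > 0" "\<And>u. norm (kf s (of_real u)) \<le> B * exp (- \<bar>u\<bar>)"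
proof -
  have "a \<ge> 0" using assms by linarith
  then obtain B where B: "B > 0" "\<And>u::real. exp (a * \<bar>u\<bar> - 2 * cosh u) \<le> B * exp (- \<bar>u\<bar>)"
    using master_bound by blast
  show ?thesis
  proof (rule that[OF B(1)])
    fix u show "norm (kf s (of_real u)) \<le> B * exp (- \<bar>u\<bar>)"
      using kf_real_bound[OF assms, of u] B(2)[of u] by linarith
  qed
qed

lemma cont_kf_real: "continuous_on UNIV (\<lambda>u::real. kf s (of_real u))"
  unfolding kf_def by (intro continuous_intros)

lemma kf_abs_int: "(\<lambda>u::real. kf s (of_real u)) absolutely_integrable_on UNIV"
proof -
  obtain B where B: "B > 0" "\<And>u. norm (kf s (of_real u)) \<le> B * exp (- \<bar>u\<bar>)"
    using kf_real_dom[of s "\<bar>Re s\<bar>"] by auto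
  show ?thesis
    by (rule abs_int_cont_bound[OF cont_kf_real _ B(2)])
       (intro integrable_on_mult_right, use exp_abs_integrable[of 1] in simp)
qed

lemma range_exp_real: "exp ` (UNIV::real set) = {0<..}"
  by (auto simp: image_iff) (metis exp_ln)

lemma besselK_Kint: "besselK s 2 = Kint s / 2"
proof -
  define f where "f = (\<lambda>t::real. complex_of_real (exp (- 2 * (t + 1/t) / 2)) * (complex_of_real t) powr (s - 1))"
  have d: "\<And>x. x \<in> UNIV \<Longrightarrow> (exp has_field_derivative exp x) (at x within UNIV)"
    by (auto intro!: derivative_eq_intros)
  have eq: "\<bar>exp x\<bar> *\<^sub>R f (exp x) = kf s (of_real x)" for x :: real
  proof -
    have p: "complex_of_real (exp x) powr (s - 1) = exp ((s - 1) * of_real x)"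
      by (simp add: powr_def Ln_of_real)
    have q: "exp (- 2 * (exp x + 1 / exp x) / 2) = exp (-(exp x + exp (-x)))"
    proof -
      have "- 2 * (exp x + 1 / exp x) / 2 = -(exp x + exp (-x))"
        by (simp add: exp_minus field_simps)
      thus ?thesis by simp
    qed
    have r: "complex_of_real (exp (-(exp x + exp (-x)))) = exp (- (exp (of_real x) + exp (- of_real x)))"
      by (simp flip: exp_of_real)
    have "\<bar>exp x\<bar> *\<^sub>R f (exp x) = exp (of_real x) * exp (- (exp (of_real x) + exp (- of_real x))) * exp ((s - 1) * of_real x)"
      unfolding f_def p q r by (simp add: scaleR_conv_of_real exp_of_real)
    also have "\<dots> = exp (of_real x + (- (exp (of_real x) + exp (- of_real x))) + (s - 1) * of_real x)"
      by (simp add: exp_add)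
    also have "of_real x + (- (exp (of_real x) + exp (- of_real x))) + (s - 1) * of_real x = s * of_real x - 2 * cosh (complex_of_real x)"
      by (simp add: cosh_def scaleR_conv_of_real algebra_simps)
    also have "exp (s * of_real x - 2 * cosh (complex_of_real x)) = kf s (of_real x)"
      unfolding kf_def ..
    finally show ?thesis .
  qed
  have ai: "(\<lambda>x. \<bar>exp x\<bar> *\<^sub>R f (exp x)) absolutely_integrable_on UNIV"
    unfolding eq by (rule kf_abs_int)
  note cc = cov_real[OF _ d _ ai, unfolded range_exp_real]
  have eqf: "(\<lambda>x. \<bar>exp x\<bar> *\<^sub>R f (exp x)) = (\<lambda>x. kf s (of_real x))"
    by (rule ext, rule eq)
  have "integral {0<..} f = integral UNIV (\<lambda>x. \<bar>exp x\<bar> *\<^sub>R f (exp x))"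
    using cc(2) by (simp add: inj_on_def)
  also have "\<dots> = Kint s" unfolding Kint_def eqf ..
  moreover have "besselK s 2 = (1/2) * integral {0<..} f" unfolding besselK_def f_def ..
  ultimately show ?thesis by simp
qed

lemma Kint_even: "Kint (-s) = Kint s"
proof -
  have "integral UNIV (\<lambda>u::real. kf s (of_real (-u))) = Kint s"
    unfolding Kint_def using reflect_UNIV(2)[OF kf_abs_int[of s]] by simp
  moreover have "kf s (of_real (-u)) = kf (-s) (of_real u)" for u
    by (simp add: kf_def cosh_of_real')
  ultimately show ?thesis by (simp add: Kint_def)
qed

lemma Kint_cnj: "Kint (cnj s) = cnj (Kint s)"
proof -
  have "cnj (kf s (of_real u)) = kf (cnj s) (of_real u)" for u
    by (simp add: kf_def cosh_of_real' exp_cnj)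
  thus ?thesis by (simp add: Kint_def integral_cnj)
qed

lemma exp_cosh_integrable: "(\<lambda>u::real. exp (- 2 * cosh u)) integrable_on UNIV"
proof -
  obtain B where B: "B > 0" "\<And>u::real. exp (0 * \<bar>u\<bar> - 2 * cosh u) \<le> B * exp (- \<bar>u\<bar>)"
    using master_bound[of 0] by auto
  have "(\<lambda>u::real. exp (- 2 * cosh u)) absolutely_integrable_on UNIV"
    by (rule abs_int_cont_bound[where g="\<lambda>u. B * exp (- \<bar>u\<bar>)"])
       (use B in \<open>auto intro!: continuous_intros integrable_on_mult_right exp_abs_integrable[of 1, simplified]\<close>)
  thus ?thesis by (simp add: absolutely_integrable_on_def)
qed

lemma Kint_0: "Kint 0 = of_real (integral UNIV (\<lambda>u::real. exp (- 2 * cosh u)))"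
proof -
  have ai: "(\<lambda>u::real. kf 0 (of_real u)) absolutely_integrable_on UNIV" by (rule kf_abs_int)
  have e: "kf 0 (of_real u) = of_real (exp (- 2 * cosh u))" for u
    by (simp add: kf_def cosh_of_real' flip: exp_of_real)
  have "(\<lambda>u::real. exp (- 2 * cosh u)) integrable_on UNIV"
    by (rule exp_cosh_integrable)
  hence "((\<lambda>u. complex_of_real (exp (- 2 * cosh u))) has_integral of_real (integral UNIV (\<lambda>u. exp (- 2 * cosh u)))) UNIV"
    by (intro has_integral_of_real integrable_integral)
  thus ?thesis unfolding Kint_def e by (rule integral_unique)
qed

lemma int_exp_cosh_pos: "integral UNIV (\<lambda>u::real. exp (- 2 * cosh u)) > 0"
proof -
  have ai: "(\<lambda>u::real. kf 0 (of_real u)) absolutely_integrable_on UNIV" by (rule kf_abs_int)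
  have e: "kf 0 (of_real u) = of_real (exp (- 2 * cosh u))" for u
    by (simp add: kf_def cosh_of_real' flip: exp_of_real)
  have i: "(\<lambda>u::real. exp (- 2 * cosh u)) integrable_on UNIV"
    by (rule exp_cosh_integrable)
  have "0 < integral {0..1} (\<lambda>u::real. exp (- 2 * exp (1::real)))" by simp
  also have "\<dots> \<le> integral {0..1} (\<lambda>u::real. exp (- 2 * cosh u))"
  proof (rule integral_le)
    show "(\<lambda>u::real. exp (- 2 * exp (1::real))) integrable_on {0..1}"
      by (intro integrable_continuous_interval continuous_intros)
    show "(\<lambda>u::real. exp (- 2 * cosh u)) integrable_on {0..1}"
      by (rule integrable_on_subinterval[OF i]) auto
    fix u :: real assume u: "u \<in> {0..1}"
    have "cosh u \<le> exp \<bar>u\<bar>" by (simp add: cosh_def abs_if)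
    also have "\<dots> \<le> exp 1" using u by simp
    finally show "exp (- 2 * exp (1::real)) \<le> exp (- 2 * cosh u)" by simp
  qed
  also have "\<dots> \<le> integral UNIV (\<lambda>u. exp (- 2 * cosh u))"
    by (rule integral_subset_le) (use integrable_on_subinterval[OF i, of 0 1] i in auto)
  finally show ?thesis .
qed

lemma Kint_0_ne: "Kint 0 \<noteq> 0"
  using int_exp_cosh_pos by (simp add: Kint_0)


lemma Kint_holo: "Kint holomorphic_on UNIV"
proof -
  define hn where "hn = (\<lambda>(n::nat) s. integral {-real n..real n} (\<lambda>u. kf s (of_real u)))"
  have hol: "hn n holomorphic_on UNIV" for n
  proof -
    have "(\<lambda>s. integral (cbox (-real n) (real n)) (\<lambda>u. kf s (of_real u))) holomorphic_on UNIV"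
    proof (rule leibniz_rule_holomorphic[where fx="\<lambda>s u. of_real u * kf s (of_real u)"])
      show "((\<lambda>s. kf s (of_real t)) has_field_derivative of_real t * kf x (of_real t)) (at x within UNIV)"
        for x t
        unfolding kf_def by (auto intro!: derivative_eq_intros simp: mult.commute)
      show "(\<lambda>u. kf x (of_real u)) integrable_on cbox (-real n) (real n)" for x
        unfolding kf_def cbox_interval by (intro integrable_continuous_real continuous_intros)
      show "continuous_on (UNIV \<times> cbox (- real n) (real n)) (\<lambda>(s, u). of_real u * kf s (of_real u))"
        unfolding kf_def case_prod_unfold by (intro continuous_intros)
    qed auto
    thus ?thesis by (simp add: hn_def cbox_interval)
  qed
  show ?thesis
  proof (rule holomorphic_uniform_sequence[OF open_UNIV hol])
    fix x :: complex
    define a where "a = \<bar>Re x\<bar> + 1"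
    have a0: "a \<ge> 0" by (simp add: a_def)
    obtain B where B: "B > 0" "\<And>u::real. exp (a * \<bar>u\<bar> - 2 * cosh u) \<le> B * exp (- \<bar>u\<bar>)"
      using master_bound[OF a0] by blast
    define g where "g = (\<lambda>u::real. B * exp (- \<bar>u\<bar>))"
    have gi: "g integrable_on UNIV"
      unfolding g_def by (intro integrable_on_mult_right) (use exp_abs_integrable[of 1] in simp)
    have ga: "g absolutely_integrable_on UNIV"
      using gi B(1) by (intro nonnegative_absolutely_integrable_1) (auto simp: g_def)
    have bnd: "norm (kf s (of_real u)) \<le> g u" if "s \<in> cball x 1" for s u
    proof -
      have "\<bar>Re s - Re x\<bar> \<le> 1"
        using that abs_Re_le_cmod[of "s - x"] by (simp add: dist_norm norm_minus_commute)
      hence "\<bar>Re s\<bar> \<le> a" by (simp add: a_def)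
      from kf_real_bound[OF this, of u] B(2)[of u] show ?thesis by (simp add: g_def)
    qed
    have lim: "(\<lambda>n. integral {-real n..real n} g) \<longlonglongrightarrow> integral UNIV g"
      by (rule trunc_lim[OF ga])
    have "uniform_limit (cball x 1) hn Kint sequentially"
      unfolding uniform_limit_iff
    proof (intro allI impI)
      fix e :: real assume e: "e > 0"
      from lim e obtain N where N: "\<And>n. n \<ge> N \<Longrightarrow> dist (integral {-real n..real n} g) (integral UNIV g) < e"
        unfolding lim_sequentially by blast
      show "\<forall>\<^sub>F n in sequentially. \<forall>s\<in>cball x 1. dist (hn n s) (Kint s) < e"
        unfolding eventually_sequentially
      proof (intro exI allI impI ballI)
        fix n s assume n: "N \<le> n" and s: "s \<in> cball x 1"
        have "dist (hn n s) (Kint s) = norm (Kint s - hn n s)"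
          by (simp add: dist_norm norm_minus_commute)
        also have "\<dots> \<le> integral UNIV g - integral {-real n..real n} g"
          unfolding Kint_def hn_def
          by (rule trunc_err) (use kf_abs_int[of s] gi bnd[OF s] in \<open>auto simp: absolutely_integrable_on_def\<close>)
        also have "\<dots> < e" using N[OF n] by (simp add: dist_norm)
        finally show "dist (hn n s) (Kint s) < e" .
      qed
    qed
    thus "\<exists>d>0. cball x d \<subseteq> UNIV \<and> uniform_limit (cball x d) hn Kint sequentially"
      by (intro exI[of _ 1]) auto
  qed
qed

definition Gf :: "complex \<Rightarrow> complex" where
  "Gf s = besselK s 2 / (s * besselK 0 2)"

definition Kn :: "complex \<Rightarrow> complex" where
  "Kn s = Kint s / Kint 0"

lemma Kn_holo: "Kn holomorphic_on UNIV"
  unfolding Kn_def by (intro holomorphic_intros Kint_holo Kint_0_ne)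

lemma Kn_0: "Kn 0 = 1"
  using Kint_0_ne by (simp add: Kn_def)

lemma Gf_eq: "Gf = (\<lambda>w. Kn w / (w - 0) ^ 1)"
  using Kint_0_ne by (auto simp: fun_eq_iff Gf_def Kn_def besselK_Kint)

lemma Gf_eq': "Gf = (\<lambda>w. Kn w / (w - 0))"
  using Kint_0_ne by (auto simp: fun_eq_iff Gf_def Kn_def besselK_Kint)

lemma Gf_holo: "Gf holomorphic_on (UNIV - {0})"
  unfolding Gf_eq' by (intro holomorphic_intros holomorphic_on_subset[OF Kn_holo]) auto

lemma Gf_pole: "is_pole Gf 0"
  unfolding Gf_eq using is_pole_basic'[OF Kn_holo open_UNIV, of 1] Kn_0 by simp

lemma Gf_zorder: "zorder Gf 0 = -1"
  unfolding Gf_eq using zorder_nonzero_div_power[OF open_UNIV _ Kn_holo, of 0 1] Kn_0 by simp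

lemma Gf_residue: "residue Gf 0 = 1"
  unfolding Gf_eq' using residue_simple[OF open_UNIV _ Kn_holo, of 0] Kn_0 by simp

lemma Gf_odd: "Gf (-s) = - Gf s"
  by (simp add: Gf_def besselK_Kint Kint_even)


definition f0 :: "real \<Rightarrow> real" where "f0 u = exp (- 2 * cosh u)"
definition I0 :: real where "I0 = integral UNIV f0"
definition Af :: "real \<Rightarrow> real" where "Af v = integral {v..} f0"

lemma f0_eq: "f0 = (\<lambda>u. exp (- 2 * cosh u))" by (rule ext) (simp add: f0_def)

lemma f0_pos: "f0 u > 0" by (simp add: f0_def)

lemma f0_cont: "continuous_on S f0"
  unfolding f0_def by (intro continuous_intros)

lemma f0_abs_int: "f0 absolutely_integrable_on UNIV"
  using exp_cosh_integrable f0_pos unfolding f0_eq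
  by (intro nonnegative_absolutely_integrable_1) (auto simp: less_imp_le)

lemma f0_abs_int_on: "f0 absolutely_integrable_on {v..}"
  by (rule set_integrable_subset[OF f0_abs_int]) auto

lemma f0_int_on: "f0 integrable_on {v..}"
  using f0_abs_int_on by (simp add: absolutely_integrable_on_def)

lemma I0_pos: "I0 > 0"
  using int_exp_cosh_pos by (simp add: I0_def f0_eq)

lemma Af_split:
  assumes "a \<le> v"
  shows "Af a = integral {a..v} f0 + Af v"
proof -
  have h1: "(f0 has_integral integral {a..v} f0) {a..v}"
    by (intro integrable_integral integrable_continuous_real f0_cont)
  have h2: "(f0 has_integral Af v) {v..}"
    unfolding Af_def by (intro integrable_integral f0_int_on)
  have "(f0 has_integral (integral {a..v} f0 + Af v)) ({a..v} \<union> {v..})"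
    by (rule has_integral_Un[OF h1 h2]) (auto intro: negligible_subset[of "{v}"])
  moreover have "{a..v} \<union> {v..} = {a..}" using assms by auto
  ultimately show ?thesis unfolding Af_def by (simp add: integral_unique)
qed

lemma Af_deriv: "(Af has_real_derivative (- f0 v)) (at v)"
proof -
  define a where "a = v - 1"
  define b where "b = v + 1"
  have "((\<lambda>u. integral {a..u} f0) has_vector_derivative f0 v) (at v within {a..b})"
    by (rule integral_has_vector_derivative) (auto simp: a_def b_def intro: f0_cont)
  moreover have "v \<in> interior {a..b}" by (simp add: a_def b_def)
  ultimately have d1: "((\<lambda>u. integral {a..u} f0) has_vector_derivative f0 v) (at v)"
    by (simp only: at_within_interior)
  have d1': "((\<lambda>u. integral {a..u} f0) has_real_derivative f0 v) (at v)"
    using d1 by (simp only: has_real_derivative_iff_has_vector_derivative)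
  have d2: "((\<lambda>u. Af a - integral {a..u} f0) has_real_derivative (0 - f0 v)) (at v)"
    by (rule DERIV_diff[OF DERIV_const d1'])
  have av: "v \<in> {a<..}" unfolding a_def by simp
  have e: "\<And>y. y \<in> {a<..} \<Longrightarrow> Af a - integral {a..y} f0 = Af y"
  proof -
    fix y :: real assume "y \<in> {a<..}"
    hence "a \<le> y" by simp
    from Af_split[OF this] show "Af a - integral {a..y} f0 = Af y" by simp
  qed
  have "(Af has_real_derivative (0 - f0 v)) (at v)"
    by (rule has_field_derivative_transform_within_open[OF d2 open_greaterThan av e])
  thus ?thesis by simp
qed

lemma Af_cont: "continuous_on UNIV Af"
  by (intro continuous_at_imp_continuous_on ballI DERIV_isCont[OF Af_deriv])

lemma Af_nonneg: "Af v \<ge> 0"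
  unfolding Af_def using f0_pos f0_int_on by (intro integral_nonneg) (auto simp: less_imp_le)

lemma Af_le: "Af v \<le> I0"
  unfolding Af_def I0_def
  by (rule integral_subset_le) (use f0_int_on f0_pos f0_abs_int in \<open>auto simp: less_imp_le absolutely_integrable_on_def\<close>)

lemma Af_decay:
  assumes "m \<ge> 0"
  obtains B where "B > 0" "\<And>v. v \<ge> 0 \<Longrightarrow> Af v \<le> B * exp (- (m + 1) * v)"
proof -
  obtain B where B: "B > 0" "\<And>u::real. exp (m * \<bar>u\<bar> - 2 * cosh u) \<le> B * exp (- \<bar>u\<bar>)"
    using master_bound[OF assms] by blast
  have fb: "f0 w \<le> B * exp (- (m + 1) * w)" if "w \<ge> 0" for w
  proof -
    have "f0 w = exp (m * \<bar>w\<bar> - 2 * cosh w) * exp (- m * w)"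
      using that by (simp add: f0_def flip: exp_add)
    also have "\<dots> \<le> B * exp (- \<bar>w\<bar>) * exp (- m * w)"
      by (intro mult_right_mono B(2)) auto
    also have "\<dots> = B * exp (- \<bar>w\<bar> + - m * w)"
      by (simp only: exp_add mult.assoc)
    also have "\<dots> = B * exp (- (m + 1) * w)"
    proof -
      have "- \<bar>w\<bar> + - m * w = - (m + 1) * w"
        using that by (simp add: algebra_simps)
      thus ?thesis by simp
    qed
    finally show ?thesis .
  qed
  show ?thesis
  proof (rule that[OF B(1)])
    fix v :: real assume v: "v \<ge> 0"
    have m1: "m + 1 > 0" using assms by simp
    have hi: "((\<lambda>w. B * exp (- (m + 1) * w)) has_integral B * (exp (- (m + 1) * v) / (m + 1))) {v..}"
      by (intro has_integral_mult_right has_integral_exp_minus_to_infinity m1)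
    have "Af v \<le> B * (exp (- (m + 1) * v) / (m + 1))"
      unfolding Af_def
      by (rule has_integral_le[OF integrable_integral[OF f0_int_on] hi]) (use fb v in auto)
    also have "\<dots> \<le> B * exp (- (m + 1) * v)"
      using B(1) m1 assms by (intro mult_left_mono) (auto simp: divide_le_eq)
    finally show "Af v \<le> B * exp (- (m + 1) * v)" .
  qed
qed

definition gg :: "real \<Rightarrow> real" where "gg t = exp (- t - 1/t) / t"

lemma exp_image_atLeast: "exp ` {(v::real)..} = {exp v..}"
proof -
  have "x \<in> exp ` {v..}" if x: "x \<ge> exp v" for x
  proof -
    have "x > 0" using x exp_gt_zero[of v] by linarith
    moreover have "ln x \<ge> v" using x \<open>x > 0\<close> by (metis exp_le_cancel_iff exp_ln)
    ultimately show "x \<in> exp ` {v..}" by (intro image_eqI[of _ _ "ln x"]) auto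
  qed
  thus ?thesis by auto
qed

lemma gg_Af: "integral {exp v..} gg = Af v"
proof -
  have d: "\<And>x. x \<in> {v..} \<Longrightarrow> (exp has_field_derivative exp x) (at x within {v..})"
    by (auto intro!: derivative_eq_intros)
  have eq: "\<bar>exp x\<bar> *\<^sub>R gg (exp x) = f0 x" for x
  proof -
    have "\<bar>exp x\<bar> *\<^sub>R gg (exp x) = exp (- exp x - exp (-x))"
      by (simp add: gg_def exp_minus inverse_eq_divide)
    also have "\<dots> = f0 x" by (simp add: f0_def cosh_def)
    finally show ?thesis .
  qed
  have ai: "(\<lambda>x. \<bar>exp x\<bar> *\<^sub>R gg (exp x)) absolutely_integrable_on {v..}"
    unfolding eq by (rule f0_abs_int_on)
  note cc = cov_real[OF _ d _ ai, unfolded exp_image_atLeast]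
  have "integral {exp v..} gg = integral {v..} (\<lambda>x. \<bar>exp x\<bar> *\<^sub>R gg (exp x))"
    using cc(2) by (simp add: inj_on_def)
  also have "\<dots> = Af v" unfolding eq Af_def ..
  finally show ?thesis .
qed


lemma exp_neg_lim_top: "c > 0 \<Longrightarrow> ((\<lambda>v::real. exp (- c * v)) \<longlongrightarrow> 0) at_top"
proof -
  assume c: "c > 0"
  have "filterlim (\<lambda>v::real. c * (- v)) at_bot at_top"
    by (rule filterlim_tendsto_pos_mult_at_bot[OF tendsto_const c filterlim_uminus_at_bot_at_top])
  hence "((\<lambda>v::real. exp (c * (- v))) \<longlongrightarrow> 0) at_top"
    by (rule filterlim_compose[OF exp_at_bot])
  thus ?thesis by simp
qed

lemma exp_pos_lim_bot: "c > 0 \<Longrightarrow> ((\<lambda>v::real. exp (c * v)) \<longlongrightarrow> 0) at_bot"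
proof -
  assume c: "c > 0"
  have "filterlim (\<lambda>v::real. c * v) at_bot at_bot"
    by (rule filterlim_tendsto_pos_mult_at_bot[OF tendsto_const c filterlim_ident])
  thus ?thesis by (rule filterlim_compose[OF exp_at_bot])
qed

lemma norm_AE: "norm (of_real (Af v) * exp (s * of_real v)) = Af v * exp (Re s * v)"
  using Af_nonneg[of v] by (simp add: norm_mult)

lemma AE_bounds:
  assumes "Re s > 0"
  obtains B where "B > 0" "\<And>v. v \<ge> 0 \<Longrightarrow> Af v * exp (Re s * v) \<le> B * exp (- 2 * v)"
proof -
  obtain B where B: "B > 0" "\<And>v. v \<ge> 0 \<Longrightarrow> Af v \<le> B * exp (- (Re s + 1 + 1) * v)"
    using Af_decay[of "Re s + 1"] assms by auto
  show ?thesis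
  proof (rule that[OF B(1)])
    fix v :: real assume v: "v \<ge> 0"
    have "Af v * exp (Re s * v) \<le> B * exp (- (Re s + 1 + 1) * v) * exp (Re s * v)"
      by (intro mult_right_mono B(2) v) auto
    also have "\<dots> = B * exp (- (Re s + 1 + 1) * v + Re s * v)"
      by (simp only: exp_add mult.assoc)
    also have "- (Re s + 1 + 1) * v + Re s * v = - 2 * v" by (simp add: algebra_simps)
    finally show "Af v * exp (Re s * v) \<le> B * exp (- 2 * v)" .
  qed
qed

lemma AE_abs_int:
  assumes "Re s > 0"
  shows "(\<lambda>v. of_real (Af v) * exp (s * of_real v)) absolutely_integrable_on UNIV"
proof -
  obtain B where B: "B > 0" "\<And>v. v \<ge> 0 \<Longrightarrow> Af v * exp (Re s * v) \<le> B * exp (- 2 * v)"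
    using AE_bounds[OF assms] by blast
  define \<mu> where "\<mu> = min (Re s) 1"
  have mu: "\<mu> > 0" "\<mu> \<le> Re s" "\<mu> \<le> 2" using assms by (auto simp: \<mu>_def)
  show ?thesis
  proof (rule abs_int_cont_bound[where g="\<lambda>v. (I0 + B) * exp (- \<mu> * \<bar>v\<bar>)"])
    show "continuous_on UNIV (\<lambda>v. complex_of_real (Af v) * exp (s * complex_of_real v))"
      by (intro continuous_intros continuous_on_compose2[OF continuous_on_of_real Af_cont]) auto
    show "(\<lambda>v. (I0 + B) * exp (- \<mu> * \<bar>v\<bar>)) integrable_on UNIV"
      by (intro integrable_on_mult_right exp_abs_integrable mu)
    fix v :: real
    show "norm (of_real (Af v) * exp (s * of_real v)) \<le> (I0 + B) * exp (- \<mu> * \<bar>v\<bar>)"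
    proof (cases "v \<ge> 0")
      case True
      have "norm (of_real (Af v) * exp (s * of_real v)) \<le> B * exp (- 2 * v)"
        unfolding norm_AE using B(2)[OF True] .
      also have "\<dots> \<le> B * exp (- \<mu> * \<bar>v\<bar>)"
        using True mu B(1) by (intro mult_left_mono) (auto intro: mult_right_mono)
      also have "\<dots> \<le> (I0 + B) * exp (- \<mu> * \<bar>v\<bar>)"
        using I0_pos by (intro mult_right_mono) auto
      finally show ?thesis .
    next
      case False
      have "norm (of_real (Af v) * exp (s * of_real v)) \<le> I0 * exp (Re s * v)"
        unfolding norm_AE by (intro mult_right_mono Af_le) auto
      also have "\<dots> \<le> I0 * exp (- \<mu> * \<bar>v\<bar>)"
        using False mu I0_pos by (intro mult_left_mono) (auto intro: mult_right_mono_neg)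
      also have "\<dots> \<le> (I0 + B) * exp (- \<mu> * \<bar>v\<bar>)"
        using B(1) by (intro mult_right_mono) auto
      finally show ?thesis .
    qed
  qed
qed

lemma kf_f0: "kf s (of_real v) = of_real (f0 v) * exp (s * of_real v)"
  by (simp add: kf_def f0_def cosh_of_real' exp_diff exp_minus field_simps flip: exp_of_real)

lemma Mellin_core:
  assumes "Re s > 0"
  shows "s * integral UNIV (\<lambda>v. of_real (Af v) * exp (s * of_real v)) = Kint s"
proof -
  define H where "H = (\<lambda>v. of_real (Af v) * exp (s * of_real v))"
  obtain B where B: "B > 0" "\<And>v. v \<ge> 0 \<Longrightarrow> Af v * exp (Re s * v) \<le> B * exp (- 2 * v)"
    using AE_bounds[OF assms] by blast
  have Hi: "H absolutely_integrable_on UNIV" unfolding H_def by (rule AE_abs_int[OF assms])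
  have ki: "(\<lambda>v. kf s (of_real v)) absolutely_integrable_on UNIV" by (rule kf_abs_int)
  have dH: "(H has_vector_derivative (s * H v - kf s (of_real v))) (at v)" for v
  proof -
    have dA: "((\<lambda>v. of_real (Af v) :: complex) has_vector_derivative of_real (- f0 v)) (at v within UNIV)"
      by (rule has_vector_derivative_of_real[OF Af_deriv])
    have "((\<lambda>z. exp (s * z)) has_field_derivative s * exp (s * of_real v)) (at (of_real v))"
      by (auto intro!: derivative_eq_intros)
    hence dE: "((\<lambda>v. exp (s * of_real v)) has_vector_derivative s * exp (s * of_real v)) (at v within UNIV)"
      by (rule has_vector_derivative_real_field)
    have "(H has_vector_derivative (of_real (Af v) * (s * exp (s * of_real v)) + of_real (- f0 v) * exp (s * of_real v))) (at v within UNIV)"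
      unfolding H_def by (rule has_vector_derivative_mult[OF dA dE])
    moreover have "of_real (Af v) * (s * exp (s * of_real v)) + of_real (- f0 v) * exp (s * of_real v) = s * H v - kf s (of_real v)"
      by (simp add: H_def kf_f0 algebra_simps)
    ultimately show ?thesis by simp
  qed
  have hi: "(\<lambda>v. s * H v - kf s (of_real v)) absolutely_integrable_on UNIV"
    by (intro set_integral_diff(1) set_integrable_mult_right Hi ki)
  have top: "(H \<longlongrightarrow> 0) at_top"
  proof (rule Lim_null_comparison)
    show "\<forall>\<^sub>F v in at_top. norm (H v) \<le> B * exp (- 2 * v)"
      using B(2) unfolding H_def norm_AE eventually_at_top_linorder by blast
    show "((\<lambda>v. B * exp (- 2 * v)) \<longlongrightarrow> 0) at_top"
      using tendsto_mult_right_zero[OF exp_neg_lim_top[of 2]] by simp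
  qed
  have bot: "(H \<longlongrightarrow> 0) at_bot"
  proof (rule Lim_null_comparison)
    show "\<forall>\<^sub>F v in at_bot. norm (H v) \<le> I0 * exp (Re s * v)"
      unfolding H_def norm_AE by (intro always_eventually allI mult_right_mono Af_le) auto
    show "((\<lambda>v. I0 * exp (Re s * v)) \<longlongrightarrow> 0) at_bot"
      using tendsto_mult_right_zero[OF exp_pos_lim_bot[OF assms]] by simp
  qed
  have "integral UNIV (\<lambda>v. s * H v - kf s (of_real v)) = 0"
    by (rule FTC_R[OF dH hi top bot])
  moreover have "integral UNIV (\<lambda>v. s * H v - kf s (of_real v)) = s * integral UNIV H - Kint s"
    using Hi ki unfolding Kint_def
    by (subst integral_diff) (auto simp: absolutely_integrable_on_def intro: integrable_on_mult_right)
  ultimately show ?thesis by (simp add: H_def)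
qed


lemma besselK0: "besselK 0 2 = of_real I0 / 2"
  by (simp add: besselK_Kint Kint_0 I0_def f0_eq)

lemma Kint0_I0: "Kint 0 = of_real I0"
  by (simp add: Kint_0 I0_def f0_eq)

lemma Ffun_exp: "Ffun (exp v) = Af v / I0"
proof -
  have "(\<lambda>t. exp (- t - 1/t) / t) = gg" by (rule ext) (simp add: gg_def)
  hence "integral {exp v..} (\<lambda>t. exp (- t - 1/t) / t) = Af v" using gg_Af by simp
  thus ?thesis by (simp add: Ffun_def besselK0)
qed

lemma Fmellin_main:
  assumes "Re s > 0"
  shows "Fmellin s = besselK s 2 / (s * besselK 0 2)"
proof -
  define f where "f = (\<lambda>t::real. complex_of_real (Ffun t) * (complex_of_real t) powr (s - 1))"
  define H where "H = (\<lambda>v. of_real (Af v) * exp (s * of_real v))"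
  have d: "\<And>x. x \<in> UNIV \<Longrightarrow> (exp has_field_derivative exp x) (at x within UNIV)"
    by (auto intro!: derivative_eq_intros)
  have eq: "\<bar>exp x\<bar> *\<^sub>R f (exp x) = of_real (1 / I0) * H x" for x :: real
  proof -
    have p: "complex_of_real (exp x) powr (s - 1) = exp ((s - 1) * of_real x)"
      by (simp add: powr_def Ln_of_real)
    have "\<bar>exp x\<bar> *\<^sub>R f (exp x) = of_real (Af x / I0) * (exp (of_real x) * exp ((s - 1) * of_real x))"
      unfolding f_def p Ffun_exp by (simp add: scaleR_conv_of_real exp_of_real)
    also have "exp (of_real x) * exp ((s - 1) * of_real x) = exp (s * of_real x)"
      by (simp add: algebra_simps flip: exp_add)
    finally show ?thesis by (simp add: H_def)
  qed
  have eqf: "(\<lambda>x. \<bar>exp x\<bar> *\<^sub>R f (exp x)) = (\<lambda>x. of_real (1 / I0) * H x)"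
    by (rule ext, rule eq)
  have Hi: "H absolutely_integrable_on UNIV" unfolding H_def by (rule AE_abs_int[OF assms])
  have ai: "(\<lambda>x. \<bar>exp x\<bar> *\<^sub>R f (exp x)) absolutely_integrable_on UNIV"
    unfolding eqf by (intro set_integrable_mult_right Hi)
  note cc = cov_real[OF _ d _ ai, unfolded range_exp_real]
  have "Fmellin s = integral {0<..} f" by (simp add: Fmellin_def f_def)
  also have "\<dots> = integral UNIV (\<lambda>x. \<bar>exp x\<bar> *\<^sub>R f (exp x))"
    using cc(2) by (simp add: inj_on_def)
  also have "\<dots> = of_real (1 / I0) * integral UNIV H"
    unfolding eqf using Hi by (simp add: absolutely_integrable_on_def)
  also have "integral UNIV H = Kint s / s"
  proof -
    have "s \<noteq> 0" using assms by auto
    with Mellin_core[OF assms] show ?thesis by (simp add: H_def field_simps)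
  qed
  also have "of_real (1 / I0) * (Kint s / s) = besselK s 2 / (s * besselK 0 2)"
    using I0_pos by (simp add: besselK_Kint Kint0_I0 field_simps)
  finally show ?thesis .
qed


lemma shift_lemma:
  fixes \<Phi> :: "complex \<Rightarrow> complex" and \<theta> :: real and M :: "real \<Rightarrow> real"
  assumes holo: "\<Phi> holomorphic_on UNIV" and th: "\<theta> > 0"
    and i0: "(\<lambda>u::real. \<Phi> (of_real u)) absolutely_integrable_on UNIV"
    and i1: "(\<lambda>u::real. \<Phi> (of_real u + \<i> * of_real \<theta>)) absolutely_integrable_on UNIV"
    and bnd: "\<And>x v. 0 \<le> v \<Longrightarrow> v \<le> \<theta> \<Longrightarrow> norm (\<Phi> (of_real x + \<i> * of_real v)) \<le> M x"
    and top: "(M \<longlongrightarrow> 0) at_top" and bot: "(M \<longlongrightarrow> 0) at_bot"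
  shows "integral UNIV (\<lambda>u. \<Phi> (of_real u + \<i> * of_real \<theta>)) = integral UNIV (\<lambda>u. \<Phi> (of_real u))"
proof -
  obtain P where P0: "\<And>z. z \<in> UNIV \<Longrightarrow> (P has_field_derivative \<Phi> z) (at z within UNIV)"
    using holomorphic_convex_primitive'[OF convex_UNIV open_UNIV holo] by blast
  have P: "(P has_field_derivative \<Phi> z) (at z)" for z using P0[of z] by simp
  have dc: "((\<lambda>u::real. P (of_real u + c)) has_vector_derivative \<Phi> (of_real u + c)) (at u within S)"
    for c u S
  proof -
    have "((\<lambda>z. P (z + c)) has_field_derivative \<Phi> (of_real u + c) * 1) (at (of_real u))"
      by (rule DERIV_chain2[where f=P and g="\<lambda>z. z + c", OF P]) (auto intro!: derivative_eq_intros)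
    thus ?thesis using has_vector_derivative_real_field by fastforce
  qed
  have ftc: "integral {a..b} (\<lambda>u. \<Phi> (of_real u + c)) = P (of_real b + c) - P (of_real a + c)"
    if "a \<le> b" for a b c
    by (rule integral_unique, rule fundamental_theorem_of_calculus[OF that]) (use dc in auto)
  have side: "norm (P (of_real x + \<i> * of_real \<theta>) - P (of_real x)) \<le> M x * \<theta>" for x
  proof -
    define f where "f = (\<lambda>v::real. P (of_real x + \<i> * of_real v))"
    have df: "(f has_vector_derivative (\<Phi> (of_real x + \<i> * of_real v) * \<i>)) (at v within S)" for v S
    proof -
      have "((\<lambda>z. P (of_real x + \<i> * z)) has_field_derivative \<Phi> (of_real x + \<i> * of_real v) * \<i>) (at (of_real v))"
        by (rule DERIV_chain2[where f=P and g="\<lambda>z. of_real x + \<i> * z", OF P]) (auto intro!: derivative_eq_intros)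
      thus ?thesis unfolding f_def using has_vector_derivative_real_field by fastforce
    qed
    have "norm (f \<theta> - f 0) \<le> M x * \<theta> - M x * 0"
    proof (rule differentiable_bound_general[OF th])
      show "continuous_on {0..\<theta>} f"
        by (intro continuous_at_imp_continuous_on ballI has_vector_derivative_continuous[OF df])
      show "continuous_on {0..\<theta>} (\<lambda>v. M x * v)" by (intro continuous_intros)
      fix v assume v: "0 < v" "v < \<theta>"
      show "(f has_vector_derivative (\<Phi> (of_real x + \<i> * of_real v) * \<i>)) (at v)" by (rule df)
      show "((\<lambda>v. M x * v) has_vector_derivative M x) (at v)"
        by (auto intro!: derivative_eq_intros simp flip: has_real_derivative_iff_has_vector_derivative)
      show "norm (\<Phi> (of_real x + \<i> * of_real v) * \<i>) \<le> M x"
        using bnd[of v x] v by (simp add: norm_mult)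
    qed
    thus ?thesis by (simp add: f_def)
  qed
  define D where "D = (\<lambda>n::nat. integral {-real n..real n} (\<lambda>u. \<Phi> (of_real u + \<i> * of_real \<theta>))
                                 - integral {-real n..real n} (\<lambda>u. \<Phi> (of_real u)))"
  have Deq: "D n = (P (of_real (real n) + \<i> * of_real \<theta>) - P (of_real (real n)))
                  - (P (of_real (- real n) + \<i> * of_real \<theta>) - P (of_real (- real n)))" for n
  proof -
    have "integral {-real n..real n} (\<lambda>u. \<Phi> (of_real u)) = integral {-real n..real n} (\<lambda>u. \<Phi> (of_real u + 0))"
      by simp
    also have "\<dots> = P (of_real (real n) + 0) - P (of_real (- real n) + 0)" by (rule ftc) simp
    finally have a: "integral {-real n..real n} (\<lambda>u. \<Phi> (of_real u)) = P (of_real (real n)) - P (of_real (- real n))"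
      by simp
    have b: "integral {-real n..real n} (\<lambda>u. \<Phi> (of_real u + \<i> * of_real \<theta>)) =
             P (of_real (real n) + \<i> * of_real \<theta>) - P (of_real (- real n) + \<i> * of_real \<theta>)"
      by (rule ftc) simp
    show ?thesis unfolding D_def a b by (simp add: algebra_simps)
  qed
  have "(\<lambda>n. \<theta> * (M (real n) + M (- real n))) \<longlonglongrightarrow> \<theta> * (0 + 0)"
  proof (intro tendsto_intros)
    show "(\<lambda>n. M (real n)) \<longlonglongrightarrow> 0"
      by (rule filterlim_compose[OF top filterlim_real_sequentially])
    show "(\<lambda>n. M (- real n)) \<longlonglongrightarrow> 0"
      by (rule filterlim_compose[OF bot])
         (rule filterlim_compose[OF filterlim_uminus_at_bot_at_top filterlim_real_sequentially])
  qed
  hence lim0: "(\<lambda>n. \<theta> * (M (real n) + M (- real n))) \<longlonglongrightarrow> 0" by simp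
  have "D \<longlonglongrightarrow> 0"
  proof (rule Lim_null_comparison[OF always_eventually lim0], intro allI)
    fix n
    have "norm (D n) \<le> norm (P (of_real (real n) + \<i> * of_real \<theta>) - P (of_real (real n)))
                      + norm (P (of_real (- real n) + \<i> * of_real \<theta>) - P (of_real (- real n)))"
      unfolding Deq by (rule norm_triangle_ineq4)
    also have "\<dots> \<le> M (real n) * \<theta> + M (- real n) * \<theta>"
      by (intro add_mono side)
    finally show "norm (D n) \<le> \<theta> * (M (real n) + M (- real n))" by (simp add: algebra_simps)
  qed
  moreover have "D \<longlonglongrightarrow> integral UNIV (\<lambda>u. \<Phi> (of_real u + \<i> * of_real \<theta>)) - integral UNIV (\<lambda>u. \<Phi> (of_real u))"
    unfolding D_def by (intro tendsto_diff trunc_lim i0 i1)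
  ultimately show ?thesis using LIMSEQ_unique by fastforce
qed


lemma master_bound_c:
  fixes a c :: real
  assumes "a \<ge> 0" "c > 0"
  obtains B where "B > 0" "\<And>u::real. exp (a * \<bar>u\<bar> - 2 * c * cosh u) \<le> B * exp (- \<bar>u\<bar>)"
proof -
  define N where "N = nat \<lceil>a\<rceil> + 1"
  have N: "N > 0" "real N \<ge> a + 1"
    using assms by (auto simp: N_def)
  show ?thesis
  proof (rule that[of "real N ^ N / c ^ N"])
    show "real N ^ N / c ^ N > 0" using N assms by simp
    fix u :: real
    have "exp (a * \<bar>u\<bar> - 2 * c * cosh u) = exp (a * \<bar>u\<bar>) * exp (- (c * (2 * cosh u)))"
      by (simp add: exp_diff exp_minus field_simps)
    also have "exp (- (c * (2 * cosh u))) \<le> exp (- (c * exp \<bar>u\<bar>))"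
      using cosh_ge_exp_abs[of u] assms by simp
    also have "\<dots> \<le> real N ^ N / (c * exp \<bar>u\<bar>) ^ N"
      by (rule exp_neg_le_pow) (use N assms in auto)
    also have "(c * exp \<bar>u\<bar>) ^ N = c ^ N * exp (real N * \<bar>u\<bar>)"
      by (simp add: power_mult_distrib exp_of_nat_mult[symmetric])
    finally have "exp (a * \<bar>u\<bar> - 2 * c * cosh u) \<le> exp (a * \<bar>u\<bar>) * (real N ^ N / (c ^ N * exp (real N * \<bar>u\<bar>)))"
      by (simp add: mult_left_mono)
    also have "\<dots> = real N ^ N / c ^ N * exp (- ((real N - a) * \<bar>u\<bar>))"
      by (simp add: exp_diff exp_minus field_simps left_diff_distrib)
    also have "\<dots> \<le> real N ^ N / c ^ N * exp (- \<bar>u\<bar>)"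
    proof -
      have "(real N - a) * \<bar>u\<bar> \<ge> 1 * \<bar>u\<bar>"
        using N by (intro mult_right_mono) auto
      thus ?thesis using N assms by (intro mult_left_mono) auto
    qed
    finally show "exp (a * \<bar>u\<bar> - 2 * c * cosh u) \<le> real N ^ N / c ^ N * exp (- \<bar>u\<bar>)" .
  qed
qed

lemma norm_sinh_le: "norm (sinh z) \<le> cosh (Re z)"
proof -
  have "norm (sinh z) = norm (exp z - exp (- z)) / 2"
    by (simp add: sinh_def norm_divide)
  also have "\<dots> \<le> (norm (exp z) + norm (exp (-z))) / 2"
    by (intro divide_right_mono norm_triangle_ineq4) auto
  also have "\<dots> = cosh (Re z)" by (simp add: cosh_def)
  finally show ?thesis .
qed

lemma Re_cosh: "Re (cosh z) = cosh (Re z) * cos (Im z)"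
  by (simp add: cosh_def Re_exp field_simps)

lemma norm_kf: "norm (kf s z) = exp (Re s * Re z - Im s * Im z - 2 * (cosh (Re z) * cos (Im z)))"
  by (simp add: kf_def Re_cosh)

lemma exp_abs_lim_top: "((\<lambda>u::real. B * exp (- \<bar>u\<bar>)) \<longlongrightarrow> 0) at_top"
proof -
  have "((\<lambda>u::real. B * exp (- 1 * u)) \<longlongrightarrow> 0) at_top"
    using tendsto_mult_right_zero[OF exp_neg_lim_top[of 1]] by simp
  moreover have "\<forall>\<^sub>F u in at_top. B * exp (- 1 * u) = B * exp (- \<bar>u::real\<bar>)"
    unfolding eventually_at_top_linorder by (intro exI[of _ 0]) auto
  ultimately show ?thesis by (rule Lim_transform_eventually)
qed

lemma exp_abs_lim_bot: "((\<lambda>u::real. B * exp (- \<bar>u\<bar>)) \<longlongrightarrow> 0) at_bot"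
proof -
  have "((\<lambda>u::real. B * exp (1 * u)) \<longlongrightarrow> 0) at_bot"
    using tendsto_mult_right_zero[OF exp_pos_lim_bot[of 1]] by simp
  moreover have "\<forall>\<^sub>F u in at_bot. B * exp (1 * u) = B * exp (- \<bar>u::real\<bar>)"
    unfolding eventually_at_bot_linorder by (intro exI[of _ 0]) auto
  ultimately show ?thesis by (rule Lim_transform_eventually)
qed

lemma sinh_kf_abs_int: "(\<lambda>u::real. sinh (of_real u) * kf s (of_real u)) absolutely_integrable_on UNIV"
proof -
  obtain B where B: "B > 0" "\<And>u::real. exp ((\<bar>Re s\<bar> + 1) * \<bar>u\<bar> - 2 * cosh u) \<le> B * exp (- \<bar>u\<bar>)"
    using master_bound[of "\<bar>Re s\<bar> + 1"] by auto
  show ?thesis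
  proof (rule abs_int_cont_bound[where g="\<lambda>u. B * exp (- \<bar>u\<bar>)"])
    show "continuous_on UNIV (\<lambda>u::real. sinh (of_real u) * kf s (of_real u))"
      unfolding kf_def by (intro continuous_intros)
    show "(\<lambda>u::real. B * exp (- \<bar>u\<bar>)) integrable_on UNIV"
      by (intro integrable_on_mult_right) (use exp_abs_integrable[of 1] in simp)
    fix u :: real
    have "norm (sinh (of_real u) * kf s (of_real u)) \<le> cosh u * exp (\<bar>Re s\<bar> * \<bar>u\<bar> - 2 * cosh u)"
      unfolding norm_mult
      by (intro mult_mono kf_real_bound) (use norm_sinh_le[of "of_real u"] in auto)
    also have "\<dots> \<le> exp \<bar>u\<bar> * exp (\<bar>Re s\<bar> * \<bar>u\<bar> - 2 * cosh u)"
      by (intro mult_right_mono) (auto simp: cosh_def abs_if)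
    also have "\<dots> = exp ((\<bar>Re s\<bar> + 1) * \<bar>u\<bar> - 2 * cosh u)"
      by (simp add: algebra_simps flip: exp_add)
    also have "\<dots> \<le> B * exp (- \<bar>u\<bar>)" by (rule B(2))
    finally show "norm (sinh (of_real u) * kf s (of_real u)) \<le> B * exp (- \<bar>u\<bar>)" .
  qed
qed

lemma Kint_ibp: "s * Kint s = 2 * integral UNIV (\<lambda>u::real. sinh (of_real u) * kf s (of_real u))"
proof -
  define H where "H = (\<lambda>u::real. kf s (of_real u))"
  define h where "h = (\<lambda>u::real. s * kf s (of_real u) - 2 * (sinh (of_real u) * kf s (of_real u)))"
  have dH: "(H has_vector_derivative h u) (at u)" for u
  proof -
    have "(kf s has_field_derivative h u) (at (of_real u))"
      unfolding kf_def h_def by (auto intro!: derivative_eq_intros simp: algebra_simps)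
    thus ?thesis unfolding H_def using has_vector_derivative_real_field by fastforce
  qed
  have hi: "h absolutely_integrable_on UNIV"
    unfolding h_def by (intro set_integral_diff(1) set_integrable_mult_right kf_abs_int sinh_kf_abs_int)
  obtain B where B: "B > 0" "\<And>u. norm (kf s (of_real u)) \<le> B * exp (- \<bar>u\<bar>)"
    using kf_real_dom[of s "\<bar>Re s\<bar>"] by auto
  have top: "(H \<longlongrightarrow> 0) at_top"
    by (rule Lim_null_comparison[OF always_eventually exp_abs_lim_top[of B]]) (use B(2) in \<open>auto simp: H_def\<close>)
  have bot: "(H \<longlongrightarrow> 0) at_bot"
    by (rule Lim_null_comparison[OF always_eventually exp_abs_lim_bot[of B]]) (use B(2) in \<open>auto simp: H_def\<close>)
  have "integral UNIV h = 0" by (rule FTC_R[OF dH hi top bot])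
  moreover have "integral UNIV h = s * Kint s - 2 * integral UNIV (\<lambda>u::real. sinh (of_real u) * kf s (of_real u))"
    unfolding h_def Kint_def using kf_abs_int[of s] sinh_kf_abs_int[of s]
    by (subst integral_diff) (auto simp: absolutely_integrable_on_def intro: integrable_on_mult_right)
  ultimately show ?thesis by simp
qed


lemma sin_lower: 
  fixes x :: real
  assumes "0 \<le> x" "x \<le> 1"
  shows "x / 2 \<le> sin x"
proof -
  have "\<bar>sin x - (\<Sum>m<3. sin_coeff m * x ^ m)\<bar> \<le> inverse (fact 3) * \<bar>x\<bar> ^ 3"
    by (rule Maclaurin_sin_bound)
  moreover have "(\<Sum>m<3. sin_coeff m * x ^ m) = x"
    by (simp add: sin_coeff_def numeral_3_eq_3 lessThan_Suc)
  moreover have "\<bar>x\<bar> ^ 3 \<le> x"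
  proof -
    have "x ^ 3 \<le> x ^ 1" using assms by (intro power_decreasing) auto
    thus ?thesis using assms by simp
  qed
  ultimately have "\<bar>sin x - x\<bar> \<le> inverse 6 * x"
    by (simp add: fact_numeral)
  moreover have "inverse 6 * x = x / 6" by simp
  ultimately show ?thesis using assms by linarith
qed

definition KA :: "real \<Rightarrow> real" where
  "KA A = real (nat \<lceil>A\<rceil> + 2) ^ (nat \<lceil>A\<rceil> + 2)"

lemma KA_ge1: "KA A \<ge> 1"
  unfolding KA_def by (intro one_le_power) auto

lemma wbound:
  assumes "0 \<le> a" "a \<le> A" "w > 0"
  shows "w powr (1 + a) * exp (- w) \<le> KA A * exp (- \<bar>ln w\<bar>)"
proof (cases "w \<le> 1")
  case True
  have "w powr (1 + a) \<le> w powr 1"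
    by (rule powr_mono') (use assms True in auto)
  also have "\<dots> = w" using assms by simp
  finally have h1: "w powr (1 + a) * exp (- w) \<le> w * 1"
    using assms by (intro mult_mono) auto
  have h2: "w = exp (- \<bar>ln w\<bar>)"
    using True assms by (simp add: abs_if)
  have h3: "exp (- \<bar>ln w\<bar>) \<le> KA A * exp (- \<bar>ln w\<bar>)"
    using KA_ge1[of A] by (simp add: mult_le_cancel_right1)
  show ?thesis using h1 h2 h3 by linarith
next
  case False
  define N where "N = nat \<lceil>A\<rceil> + 2"
  have N: "N > 0" "real N \<ge> A + 2" by (auto simp: N_def) linarith
  have "w powr (1 + a) \<le> w powr (real (N - 1))"
    by (rule powr_mono) (use assms False N in auto)
  also have "\<dots> = w ^ (N - 1)" using assms by (simp add: powr_realpow)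
  finally have a1: "w powr (1 + a) \<le> w ^ (N - 1)" .
  have a2: "exp (- w) \<le> real N ^ N / w ^ N" by (rule exp_neg_le_pow) (use assms N in auto)
  have "w powr (1 + a) * exp (- w) \<le> w ^ (N - 1) * (real N ^ N / w ^ N)"
    using a1 a2 assms by (intro mult_mono) auto
  also have "w ^ N = w ^ (N - 1) * w" using N by (metis Suc_pred' power_Suc2)
  also have "w ^ (N - 1) * (real N ^ N / (w ^ (N - 1) * w)) = real N ^ N / w"
    using assms by (simp add: field_simps)
  also have "\<dots> = KA A * exp (- \<bar>ln w\<bar>)"
    using False assms by (simp add: KA_def N_def exp_minus divide_inverse)
  finally show ?thesis .
qed

lemma pw_bound:
  assumes "0 \<le> a" "a \<le> A" "c > 0"
  shows "cosh u * exp (a * \<bar>u\<bar> - 2 * c * cosh u) \<le> KA A * c powr (- (1 + a)) * exp (- \<bar>\<bar>u\<bar> + ln c\<bar>)"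
proof -
  define w where "w = c * exp \<bar>u\<bar>"
  have w0: "w > 0" using assms by (simp add: w_def)
  have lnw: "ln w = ln c + \<bar>u\<bar>" using assms by (simp add: w_def ln_mult)
  have "cosh u * exp (a * \<bar>u\<bar> - 2 * c * cosh u) \<le> exp \<bar>u\<bar> * exp (a * \<bar>u\<bar> - w)"
  proof (intro mult_mono)
    show "cosh u \<le> exp \<bar>u\<bar>" by (simp add: cosh_def abs_if)
    have "w \<le> 2 * c * cosh u"
      using cosh_ge_exp_abs[of u] assms by (simp add: w_def)
    thus "exp (a * \<bar>u\<bar> - 2 * c * cosh u) \<le> exp (a * \<bar>u\<bar> - w)" by simp
  qed auto
  also have "exp \<bar>u\<bar> * exp (a * \<bar>u\<bar> - w) = exp ((1 + a) * \<bar>u\<bar>) * exp (- w)"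
    by (simp add: algebra_simps flip: exp_add)
  also have "exp ((1 + a) * \<bar>u\<bar>) = (w / c) powr (1 + a)"
    using assms by (simp add: w_def exp_powr_real mult.commute)
  also have "\<dots> = w powr (1 + a) / c powr (1 + a)"
    by (rule powr_divide)
  also have "\<dots> = c powr (- (1 + a)) * w powr (1 + a)"
    by (subst powr_minus_divide) simp
  also have "c powr (- (1 + a)) * w powr (1 + a) * exp (- w) = c powr (- (1 + a)) * (w powr (1 + a) * exp (- w))"
    by simp
  also have "\<dots> \<le> c powr (- (1 + a)) * (KA A * exp (- \<bar>ln w\<bar>))"
    by (intro mult_left_mono wbound) (use assms w0 in auto)
  finally show ?thesis by (simp add: lnw add.commute mult.commute mult.left_commute)
qed

lemma exp_abs_shift_int:
  "((\<lambda>u::real. exp (- \<bar>u + l\<bar>) + exp (- \<bar>u - l\<bar>)) has_integral 4) UNIV"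
proof -
  have e: "((\<lambda>u::real. exp (- \<bar>u\<bar>)) has_integral 2) UNIV"
    using exp_abs_integral[of 1] by simp
  have ea: "(\<lambda>u::real. exp (- \<bar>u\<bar>)) absolutely_integrable_on UNIV"
    using e by (intro nonnegative_absolutely_integrable_1) auto
  have t1: "((\<lambda>u::real. exp (- \<bar>u + l\<bar>)) has_integral 2) UNIV"
    using translate_UNIV[OF ea, of l] e
    by (metis absolutely_integrable_on_def integrable_integral integral_unique)
  have t2: "((\<lambda>u::real. exp (- \<bar>u + (- l)\<bar>)) has_integral 2) UNIV"
    using translate_UNIV[OF ea, of "-l"] e
    by (metis absolutely_integrable_on_def integrable_integral integral_unique)
  have "((\<lambda>u::real. exp (- \<bar>u + l\<bar>) + exp (- \<bar>u + (- l)\<bar>)) has_integral (2 + 2)) UNIV"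
    by (rule has_integral_add[OF t1 t2])
  thus ?thesis by simp
qed

lemma abs_split_bound:
  fixes u l :: real
  shows "exp (- \<bar>\<bar>u\<bar> + l\<bar>) \<le> exp (- \<bar>u + l\<bar>) + exp (- \<bar>u - l\<bar>)"
proof (cases "u \<ge> 0")
  case True thus ?thesis by (simp add: add_increasing2)
next
  case False
  hence "\<bar>\<bar>u\<bar> + l\<bar> = \<bar>u - l\<bar>" by (simp add: abs_minus_commute)
  thus ?thesis by (simp add: add_increasing)
qed

lemma cosh_int_bound:
  fixes f :: "real \<Rightarrow> complex"
  assumes "0 \<le> a" "a \<le> A" "c > 0" "E \<ge> 0" "continuous_on UNIV f"
    and fb: "\<And>u. norm (f u) \<le> E * (cosh u * exp (a * \<bar>u\<bar> - 2 * c * cosh u))"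
  shows "norm (integral UNIV f) \<le> E * KA A * c powr (- (1 + a)) * 4"
proof -
  define g where "g = (\<lambda>u::real. (E * KA A * c powr (- (1 + a))) * (exp (- \<bar>u + ln c\<bar>) + exp (- \<bar>u - ln c\<bar>)))"
  have gi: "(g has_integral (E * KA A * c powr (- (1 + a))) * 4) UNIV"
    unfolding g_def by (intro has_integral_mult_right exp_abs_shift_int)
  have le: "norm (f u) \<le> g u" for u
  proof -
    have "norm (f u) \<le> E * (KA A * c powr (- (1 + a)) * exp (- \<bar>\<bar>u\<bar> + ln c\<bar>))"
      using fb[of u] pw_bound[OF assms(1-3), of u] assms(4) by (meson mult_left_mono order_trans)
    also have "\<dots> \<le> E * (KA A * c powr (- (1 + a)) * (exp (- \<bar>u + ln c\<bar>) + exp (- \<bar>u - ln c\<bar>)))"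
      using KA_ge1[of A] assms(4)
      by (intro mult_left_mono abs_split_bound) (auto intro!: mult_nonneg_nonneg)
    finally show ?thesis by (simp add: g_def mult.assoc)
  qed
  have fi: "f integrable_on UNIV"
    using abs_int_cont_bound[OF assms(5) _ le] gi by (auto simp: absolutely_integrable_on_def)
  have "norm (integral UNIV f) \<le> integral UNIV g"
    by (rule integral_norm_bound_integral[OF fi _ le]) (use gi in blast)
  also have "\<dots> = E * KA A * c powr (- (1 + a)) * 4" using gi by (rule integral_unique)
  finally show ?thesis .
qed


lemma strip_bound:
  assumes "0 \<le> v" "v \<le> \<theta>" "\<theta> \<le> pi" "Im s \<ge> 0"
  shows "norm (sinh (of_real x + \<i> * of_real v) * kf s (of_real x + \<i> * of_real v))
           \<le> cosh x * exp (\<bar>Re s\<bar> * \<bar>x\<bar> - Im s * v - 2 * cos \<theta> * cosh x)"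
proof -
  have c: "cos \<theta> \<le> cos v" by (rule cos_monotone_0_pi_le) (use assms in auto)
  have ch: "cosh x \<ge> 0" by (simp add: cosh_def add_pos_pos less_imp_le)
  have f1: "Re s * x \<le> \<bar>Re s\<bar> * \<bar>x\<bar>" by (metis abs_ge_self abs_mult)
  define P where "P = cosh x * cos v"
  define Q where "Q = cosh x * cos \<theta>"
  have f2: "Q \<le> P" unfolding P_def Q_def using c ch by (rule mult_left_mono)
  have "Re s * x - Im s * v - 2 * P \<le> \<bar>Re s\<bar> * \<bar>x\<bar> - Im s * v - 2 * Q"
    using f1 f2 by linarith
  moreover have "2 * cos \<theta> * cosh x = 2 * Q" by (simp add: Q_def)
  ultimately have e: "Re s * x - Im s * v - 2 * (cosh x * cos v) \<le> \<bar>Re s\<bar> * \<bar>x\<bar> - Im s * v - 2 * cos \<theta> * cosh x"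
    unfolding P_def by simp
  have "norm (sinh (of_real x + \<i> * of_real v) * kf s (of_real x + \<i> * of_real v))
        \<le> cosh x * exp (Re s * x - Im s * v - 2 * (cosh x * cos v))"
    unfolding norm_mult norm_kf
    by (intro mult_mono) (use norm_sinh_le[of "of_real x + \<i> * of_real v"] in auto)
  also have "\<dots> \<le> cosh x * exp (\<bar>Re s\<bar> * \<bar>x\<bar> - Im s * v - 2 * cos \<theta> * cosh x)"
    using e ch by (intro mult_left_mono) auto
  finally show ?thesis .
qed

lemma Kint_large:
  assumes t2: "Im s \<ge> 2" and sA: "\<bar>Re s\<bar> \<le> A"
  shows "norm s * norm (Kint s) \<le> 8 * KA A * exp 1 * 2 powr (1 + A) * norm s powr (1 + \<bar>Re s\<bar>) * exp (- pi * Im s / 2)"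
proof -
  define t where "t = Im s"
  define a where "a = \<bar>Re s\<bar>"
  define \<theta> where "\<theta> = pi / 2 - 1 / t"
  define c where "c = cos \<theta>"
  have t: "t \<ge> 2" "t > 0" using t2 by (auto simp: t_def)
  have a: "0 \<le> a" "a \<le> A" using sA by (auto simp: a_def)
  have it: "1 / t \<le> 1 / 2" "1 / t > 0" using t by (auto simp: field_simps)
  have th: "\<theta> > 0" "\<theta> \<le> pi" using pi_ge_two it unfolding \<theta>_def by linarith+
  have c_eq: "c = sin (1 / t)" by (simp add: c_def \<theta>_def cos_diff)
  have c_low: "c \<ge> 1 / (2 * t)"
    using sin_lower[of "1/t"] it by (simp add: c_eq)
  have c0: "c > 0" using c_low t by (smt (verit) divide_pos_pos)
  define \<Phi> where "\<Phi> = (\<lambda>z. sinh z * kf s z)"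
  obtain B where B: "B > 0" "\<And>u::real. exp ((a + 1) * \<bar>u\<bar> - 2 * c * cosh u) \<le> B * exp (- \<bar>u\<bar>)"
    using master_bound_c[of "a + 1" c] a c0 by auto
  have Mb: "norm (\<Phi> (of_real x + \<i> * of_real v)) \<le> B * exp (- \<bar>x\<bar>)" if "0 \<le> v" "v \<le> \<theta>" for x v
  proof -
    have "norm (\<Phi> (of_real x + \<i> * of_real v)) \<le> cosh x * exp (a * \<bar>x\<bar> - t * v - 2 * c * cosh x)"
      unfolding \<Phi>_def a_def t_def c_def by (rule strip_bound) (use that th t in \<open>auto simp: t_def\<close>)
    also have "\<dots> \<le> exp \<bar>x\<bar> * exp (a * \<bar>x\<bar> - 2 * c * cosh x)"
    proof (intro mult_mono)
      show "cosh x \<le> exp \<bar>x\<bar>" by (simp add: cosh_def abs_if)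
      show "exp (a * \<bar>x\<bar> - t * v - 2 * c * cosh x) \<le> exp (a * \<bar>x\<bar> - 2 * c * cosh x)"
        using that t by simp
    qed auto
    also have "\<dots> = exp ((a + 1) * \<bar>x\<bar> - 2 * c * cosh x)"
      by (simp add: algebra_simps flip: exp_add)
    also have "\<dots> \<le> B * exp (- \<bar>x\<bar>)" by (rule B(2))
    finally show ?thesis .
  qed
  have holo: "\<Phi> holomorphic_on UNIV"
    unfolding \<Phi>_def kf_def sinh_def cosh_def scaleR_conv_of_real by (intro holomorphic_intros)
  have cont1: "continuous_on UNIV (\<lambda>u::real. \<Phi> (of_real u + \<i> * of_real \<theta>))"
    unfolding \<Phi>_def kf_def by (intro continuous_intros)
  have i0: "(\<lambda>u::real. \<Phi> (of_real u)) absolutely_integrable_on UNIV"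
    unfolding \<Phi>_def by (rule sinh_kf_abs_int)
  have i1: "(\<lambda>u::real. \<Phi> (of_real u + \<i> * of_real \<theta>)) absolutely_integrable_on UNIV"
    by (rule abs_int_cont_bound[OF cont1 _ Mb])
       (use th in \<open>auto intro!: integrable_on_mult_right simp: exp_abs_integrable[of 1, simplified]\<close>)
  have sh: "integral UNIV (\<lambda>u. \<Phi> (of_real u + \<i> * of_real \<theta>)) = integral UNIV (\<lambda>u. \<Phi> (of_real u))"
    by (rule shift_lemma[OF holo th(1) i0 i1 Mb exp_abs_lim_top exp_abs_lim_bot]) auto
  have ibp: "s * Kint s = 2 * integral UNIV (\<lambda>u::real. \<Phi> (of_real u))"
    unfolding \<Phi>_def by (rule Kint_ibp)
  have ib: "norm (integral UNIV (\<lambda>u. \<Phi> (of_real u + \<i> * of_real \<theta>))) \<le> exp (- t * \<theta>) * KA A * c powr (- (1 + a)) * 4"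
  proof (rule cosh_int_bound[OF a c0 _ cont1])
    fix u :: real
    have "norm (\<Phi> (of_real u + \<i> * of_real \<theta>)) \<le> cosh u * exp (a * \<bar>u\<bar> - t * \<theta> - 2 * c * cosh u)"
      unfolding \<Phi>_def a_def t_def c_def by (rule strip_bound) (use th t2 in auto)
    also have "\<dots> = exp (- t * \<theta>) * (cosh u * exp (a * \<bar>u\<bar> - 2 * c * cosh u))"
      by (simp add: algebra_simps flip: exp_add)
    finally show "norm (\<Phi> (of_real u + \<i> * of_real \<theta>)) \<le> exp (- t * \<theta>) * (cosh u * exp (a * \<bar>u\<bar> - 2 * c * cosh u))" .
  qed simp
  have "norm s * norm (Kint s) = 2 * norm (integral UNIV (\<lambda>u. \<Phi> (of_real u + \<i> * of_real \<theta>)))"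
    using ibp sh by (metis norm_mult norm_numeral)
  also have "\<dots> \<le> 2 * (exp (- t * \<theta>) * KA A * c powr (- (1 + a)) * 4)"
    using ib by (intro mult_left_mono) auto
  also have "exp (- t * \<theta>) = exp 1 * exp (- pi * t / 2)"
  proof -
    have "- t * \<theta> = 1 + (- pi * t / 2)" using t by (simp add: \<theta>_def field_simps)
    thus ?thesis by (simp only: exp_add)
  qed
  also have "c powr (- (1 + a)) \<le> 2 powr (1 + A) * norm s powr (1 + a)"
  proof -
    have "c powr (- (1 + a)) \<le> (1 / (2 * t)) powr (- (1 + a))"
      by (rule powr_mono2') (use a c_low t in auto)
    also have "(1 / (2 * t)) powr (- (1 + a)) = (2 * t) powr (1 + a)"
    proof -
      have "(1 / (2 * t)) powr (- (1 + a)) = 1 / (2 * t) powr (- (1 + a))"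
        by (rule powr_divide[of 1 "2 * t", simplified]) 
      also have "(2 * t) powr (- (1 + a)) = 1 / (2 * t) powr (1 + a)"
        by (rule powr_minus_divide)
      finally show ?thesis using t by simp
    qed
    also have "\<dots> \<le> (2 * norm s) powr (1 + a)"
    proof (rule powr_mono2)
      have "t \<le> norm s" unfolding t_def using abs_Im_le_cmod[of s] by linarith
      thus "2 * t \<le> 2 * norm s" by simp
    qed (use a t in auto)
    also have "\<dots> = 2 powr (1 + a) * norm s powr (1 + a)" by (simp add: powr_mult)
    also have "\<dots> \<le> 2 powr (1 + A) * norm s powr (1 + a)"
      by (intro mult_right_mono powr_mono) (use a in auto)
    finally show ?thesis .
  qed
  finally show ?thesis
    using KA_ge1[of A]
    by (simp add: a_def t_def mult_left_mono mult.assoc mult.left_commute mult.commute)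
qed


lemma powr_self_lower:
  assumes "z \<noteq> 0"
  shows "norm z powr \<bar>Re z\<bar> \<ge> exp (-1)"
proof -
  define r where "r = norm z"
  define a where "a = \<bar>Re z\<bar>"
  have r0: "r > 0" using assms by (simp add: r_def)
  have ar: "a \<le> r" unfolding a_def r_def by (rule abs_Re_le_cmod)
  show ?thesis
  proof (cases "a = 0")
    case True thus ?thesis using r0 by (simp add: a_def r_def)
  next
    case False
    hence a0: "a > 0" by (simp add: a_def)
    show ?thesis
    proof (cases "r \<ge> 1")
      case True
      have "exp (-1) \<le> (1::real)" by simp
      also have "1 \<le> r powr a" using True a0 by (simp add: ge_one_powr_ge_zero)
      finally show ?thesis by (simp add: a_def r_def)
    next
      case False
      have "ln (1 / a) \<le> 1 / a - 1" using a0 by (intro ln_le_minus_one) auto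
      hence "- ln a \<le> 1 / a - 1" using a0 by (simp add: ln_div)
      hence "a * (- ln a) \<le> a * (1 / a - 1)" using a0 by (intro mult_left_mono) auto
      hence "a * ln a \<ge> a - 1" using a0 by (simp add: algebra_simps)
      hence "a * ln a \<ge> -1" using a0 by linarith
      hence "exp (-1) \<le> exp (a * ln a)" by simp
      also have "exp (a * ln a) = a powr a" using a0 by (simp add: powr_def mult.commute)
      also have "a powr a \<le> r powr a" by (rule powr_mono2) (use a0 ar in auto)
      finally show ?thesis by (simp add: a_def r_def)
    qed
  qed
qed

lemma Gf_norm: "norm (Gf s) = norm (Kint s) / (norm s * I0)"
  using I0_pos by (simp add: Gf_def besselK_Kint Kint0_I0 norm_divide norm_mult)

lemma Kint_norm_cnj: "norm (Kint (cnj s)) = norm (Kint s)"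
  by (simp add: Kint_cnj)

lemma Kint_large_abs:
  assumes t2: "\<bar>Im s\<bar> \<ge> 2" and sA: "\<bar>Re s\<bar> \<le> A"
  shows "norm s * norm (Kint s) \<le> 8 * KA A * exp 1 * 2 powr (1 + A) * norm s powr (1 + \<bar>Re s\<bar>) * exp (- pi * \<bar>Im s\<bar> / 2)"
proof (cases "Im s \<ge> 0")
  case True thus ?thesis using Kint_large[of s A] assms by simp
next
  case False
  have "norm (cnj s) * norm (Kint (cnj s)) \<le> 8 * KA A * exp 1 * 2 powr (1 + A) * norm (cnj s) powr (1 + \<bar>Re (cnj s)\<bar>) * exp (- pi * Im (cnj s) / 2)"
    by (rule Kint_large) (use assms False in auto)
  thus ?thesis using False by (simp add: Kint_norm_cnj)
qed

lemma Gf_bound: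
  assumes "\<sigma>1 \<le> \<sigma>2"
  shows "\<exists>C. \<forall>s. s \<noteq> 0 \<and> \<sigma>1 \<le> Re s \<and> Re s \<le> \<sigma>2 \<longrightarrow>
            norm (Gf s) \<le> C * norm s powr (\<bar>Re s\<bar> - 1) * exp (- pi * \<bar>Im s\<bar> / 2)"
proof -
  define A where "A = max \<bar>\<sigma>1\<bar> \<bar>\<sigma>2\<bar>"
  have A0: "A \<ge> 0" by (simp add: A_def)
  obtain B where B: "B > 0" "\<And>u::real. exp (A * \<bar>u\<bar> - 2 * cosh u) \<le> B * exp (- \<bar>u\<bar>)"
    using master_bound[OF A0] by blast
  define C1 where "C1 = 8 * KA A * exp 1 * 2 powr (1 + A) / I0"
  define C2 where "C2 = 2 * B / I0 * exp 1 * exp pi"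
  show ?thesis
  proof (intro exI[of _ "max C1 C2"] allI impI)
    fix s :: complex
    assume s: "s \<noteq> 0 \<and> \<sigma>1 \<le> Re s \<and> Re s \<le> \<sigma>2"
    define a where "a = \<bar>Re s\<bar>"
    define r where "r = norm s"
    have r0: "r > 0" using s by (simp add: r_def)
    have sA: "\<bar>Re s\<bar> \<le> A" using s by (auto simp: A_def)
    have I0p: "I0 > 0" by (rule I0_pos)
    have C1p: "C1 \<ge> 0" using KA_ge1[of A] I0p by (simp add: C1_def)
    have C2p: "C2 \<ge> 0" using B I0p by (simp add: C2_def)
    have rpow: "r powr (a - 1) = r powr a / r" using r0 by (simp add: powr_diff)
    show "norm (Gf s) \<le> max C1 C2 * norm s powr (\<bar>Re s\<bar> - 1) * exp (- pi * \<bar>Im s\<bar> / 2)"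
    proof (cases "\<bar>Im s\<bar> \<ge> 2")
      case True
      have k: "r * norm (Kint s) \<le> (C1 * I0) * r powr (1 + a) * exp (- pi * \<bar>Im s\<bar> / 2)"
        using Kint_large_abs[OF True sA] I0p by (simp add: C1_def r_def a_def)
      have "r powr (1 + a) = r powr (a - 1) * (r * r)"
        using r0 by (simp add: powr_add[symmetric] powr_diff) (simp add: powr_add field_simps)
      hence k2: "r * norm (Kint s) \<le> (C1 * I0) * (r powr (a - 1) * (r * r)) * exp (- pi * \<bar>Im s\<bar> / 2)"
        using k by simp
      have "norm (Gf s) = (r * norm (Kint s)) / (r * r * I0)"
        using r0 by (simp add: Gf_norm r_def field_simps)
      also have "\<dots> \<le> ((C1 * I0) * (r powr (a - 1) * (r * r)) * exp (- pi * \<bar>Im s\<bar> / 2)) / (r * r * I0)"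
        using k2 r0 I0p by (intro divide_right_mono) auto
      also have "\<dots> = C1 * r powr (a - 1) * exp (- pi * \<bar>Im s\<bar> / 2)"
        using r0 I0p by (simp add: field_simps)
      also have "\<dots> \<le> max C1 C2 * r powr (a - 1) * exp (- pi * \<bar>Im s\<bar> / 2)"
        by (intro mult_right_mono) auto
      finally show ?thesis by (simp add: r_def a_def)
    next
      case False
      have kb: "norm (Kint s) \<le> 2 * B"
      proof -
        have bnd: "norm (kf s (of_real u)) \<le> B * exp (- \<bar>u\<bar>)" for u
          using kf_real_bound[OF sA, of u] B(2)[of u] by linarith
        have gi: "((\<lambda>u::real. B * exp (- \<bar>u\<bar>)) has_integral B * 2) UNIV"
          using has_integral_mult_right[OF exp_abs_integral[of 1]] by simp
        have "norm (Kint s) \<le> integral UNIV (\<lambda>u::real. B * exp (- \<bar>u\<bar>))"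
          unfolding Kint_def
          by (rule integral_norm_bound_integral[OF _ _ bnd])
             (use kf_abs_int[of s] gi in \<open>auto simp: absolutely_integrable_on_def\<close>)
        also have "\<dots> = B * 2" using gi by (rule integral_unique)
        finally show ?thesis by simp
      qed
      have pl: "r powr a \<ge> exp (-1)" using powr_self_lower[of s] s by (simp add: r_def a_def)
      have el: "exp (- pi * \<bar>Im s\<bar> / 2) \<ge> exp (- pi)"
        using False pi_gt_zero by (simp add: mult_left_mono) 
      have "norm (Gf s) \<le> 2 * B / (r * I0)"
        using kb r0 I0p by (simp add: Gf_norm r_def divide_right_mono)
      also have "\<dots> = (2 * B / I0 * exp 1 * exp pi) * (exp (-1) / r) * exp (- pi)"
        using r0 I0p by (simp add: field_simps exp_minus)
      also have "\<dots> \<le> C2 * (r powr a / r) * exp (- pi * \<bar>Im s\<bar> / 2)"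
        unfolding C2_def using C2p r0 pl el B(1) I0p
        by (intro mult_mono divide_right_mono) (auto simp: C2_def)
      also have "\<dots> \<le> max C1 C2 * r powr (a - 1) * exp (- pi * \<bar>Im s\<bar> / 2)"
        unfolding rpow by (intro mult_right_mono) (use r0 in auto)
      finally show ?thesis by (simp add: r_def a_def)
    qed
  qed
qed


theorem mainTheorem12:
  shows "(\<forall>s. Re s > 0 \<longrightarrow> Fmellin s = besselK s 2 / (s * besselK 0 2))
    \<and> (\<exists>G :: complex \<Rightarrow> complex.
         G holomorphic_on (UNIV - {0})
       \<and> (\<forall>s. Re s > 0 \<longrightarrow> G s = Fmellin s)
       \<and> is_pole G 0 \<and> zorder G 0 = -1 \<and> residue G 0 = 1
       \<and> (\<forall>s. s \<noteq> 0 \<longrightarrow> G (-s) = - G s)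
       \<and> (\<forall>\<sigma>1 \<sigma>2. \<sigma>1 \<le> \<sigma>2 \<longrightarrow> (\<exists>C. \<forall>s. s \<noteq> 0 \<and> \<sigma>1 \<le> Re s \<and> Re s \<le> \<sigma>2 \<longrightarrow>
            norm (G s) \<le> C * norm s powr (\<bar>Re s\<bar> - 1) * exp (- pi * \<bar>Im s\<bar> / 2))))"
proof -
  have p1: "\<forall>s. Re s > 0 \<longrightarrow> Fmellin s = besselK s 2 / (s * besselK 0 2)"
    using Fmellin_main by blast
  have p2: "\<forall>s. Re s > 0 \<longrightarrow> Gf s = Fmellin s"
    using Fmellin_main by (simp add: Gf_def)
  have p3: "\<forall>s. s \<noteq> 0 \<longrightarrow> Gf (-s) = - Gf s"
    using Gf_odd by blast
  have p4: "\<forall>\<sigma>1 \<sigma>2. \<sigma>1 \<le> \<sigma>2 \<longrightarrow> (\<exists>C. \<forall>s. s \<noteq> 0 \<and> \<sigma>1 \<le> Re s \<and> Re s \<le> \<sigma>2 \<longrightarrow>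
            norm (Gf s) \<le> C * norm s powr (\<bar>Re s\<bar> - 1) * exp (- pi * \<bar>Im s\<bar> / 2))"
    using Gf_bound by blast
  show ?thesis
    using p1 p2 p3 p4 Gf_holo Gf_pole Gf_zorder Gf_residue by blast
qed

end
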